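(* Let $\mathbf v\in\mathbb{R}^\infty$, and let $\mathbf y=\mathbb{F}^{\rm S}\mathbf v$ and $\mathbf z=\mathbb{L}^{\rm S}\mathbf v$, where $\mathbb{F}^{\rm S}=(1,x(1+x))$ and $\mathbb{L}^{\rm S}=(1+2x,x(1+x))$. Let $D=(1,-x)=\mathrm{diag}(1,-1,1,\ldots)$ and $C(x)=\frac{1-\sqrt{1-4x}}{2x}$. Then: (a) $\left(\frac{1}{1+2xC(x)},xC(x)\right)\mathbf z=D(\mathbb{F}^{\rm S})^{-1}D\,\mathbf y$; (b) $\left(\frac{1}{1-4x^2C(x)^2},xC(x)\right)\mathbf z=D(\mathbb{L}^{\rm S})^{-1}D\,\mathbf y$; (c) $\left(1+2xC(x),xC(x)\right)\mathbf y=D(\mathbb{F}^{\rm S})^{-1}D\,\mathbf z$; (d) $\left(\frac{1+2xC(x)}{1-2xC(x)},xC(x)\right)\mathbf y=D(\mathbb{L}^{\rm S})^{-1}D\,\mathbf z$.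
   Context: $\mathbb{R}^\infty$ is the space of real column vectors $[v_0,v_1,\ldots]^T$, identified with generating functions. For formal power series $g(x)$ with $g(0)\neq 0$ and $f(x)$ with $f(0)=0$, $f'(0)\ne0$, $(g(x),f(x))$ denotes the (Riordan) infinite lower triangular matrix whose $j$-th column has generating function $g(x)f(x)^j$; it maps a vector with generating function $U(x)$ to one with generating function $g(x)U(f(x))$. These matrices form a group with $(g,f)(h,l)=(g\cdot h(f),l(f))$ and $(g,f)^{-1}=(1/g(\bar f),\bar f)$, $\bar f$ the compositional inverse of $f$. *)

theory Defs
  imports Complex_Main "HOL-Computational_Algebra.Formal_Power_Series"
begin

text \<open>Vectors in R^infinity are identified with their generating functions (real fps).
  The Riordan array (g,f) maps U(x) to g(x) U(f(x)).\<close>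
definition riordan :: "real fps \<Rightarrow> real fps \<Rightarrow> real fps \<Rightarrow> real fps" where
  "riordan g f U = g * (U oo f)"

definition riordan_inv :: "real fps \<Rightarrow> real fps \<Rightarrow> real fps \<Rightarrow> real fps" where
  "riordan_inv g f = riordan (inverse (g oo fps_inv f)) (fps_inv f)"

definition sqrt_1m4x :: "real fps" where
  "sqrt_1m4x = fps_radical (\<lambda>k a. root k a) 2 (1 - 4 * fps_X)"

definition catalanC :: "real fps" where
  "catalanC = (1 - sqrt_1m4x) / (2 * fps_X)"

definition Dmat :: "real fps \<Rightarrow> real fps" where
  "Dmat = riordan 1 (- fps_X)"

end

theory Submission
  imports Defs
begin

definition GG :: "real fps" where "GG = fps_X * catalanC"

lemma S_sq: "sqrt_1m4x ^ 2 = 1 - 4 * fps_X"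
proof -
  have "(root (Suc 1) (fps_nth (1 - 4 * fps_X :: real fps) 0)) ^ Suc 1 = fps_nth (1 - 4 * fps_X :: real fps) 0"
    by simp
  then have "fps_radical (\<lambda>k a. root k a) (Suc 1) (1 - 4 * fps_X :: real fps) ^ Suc 1 = 1 - 4 * fps_X"
    using power_radical[of "1 - 4 * fps_X :: real fps" "\<lambda>k a. root k a" 1] by simp
  then show ?thesis unfolding sqrt_1m4x_def by (simp add: numeral_2_eq_2)
qed

lemma S0: "fps_nth sqrt_1m4x 0 = 1"
  unfolding sqrt_1m4x_def by simp

lemma twoG: "2 * GG = 1 - sqrt_1m4x"
proof (cases "1 - sqrt_1m4x = 0")
  case True
  then show ?thesis unfolding GG_def catalanC_def by simp
next
  case False
  have "subdegree (1 - sqrt_1m4x) \<ge> 1"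
    using False S0 by (intro subdegree_geI) auto
  moreover have "subdegree (2 * fps_X :: real fps) = 1"
    by (simp add: subdegree_mult)
  ultimately have "(1 - sqrt_1m4x) / (2 * fps_X) * (2 * fps_X) = 1 - sqrt_1m4x"
    by (intro fps_times_divide_eq) auto
  then show ?thesis unfolding GG_def catalanC_def by (simp add: algebra_simps)
qed

lemma G0: "fps_nth GG 0 = 0"
proof -
  have "fps_nth (2 * GG) 0 = 0" using twoG S0 by simp
  then show ?thesis by simp
qed

lemma G_eq: "GG - GG ^ 2 = fps_X"
proof -
  have "(1 - 2 * GG) ^ 2 = 1 - 4 * fps_X" using twoG S_sq by simp
  then have "4 * (GG - GG ^ 2) = 4 * fps_X" by (simp add: power2_eq_square algebra_simps)
  moreover have "(4::real fps) \<noteq> 0" by (metis fps_numeral_nth_0 fps_zero_nth zero_neq_numeral)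
  ultimately show ?thesis using mult_left_cancel by blast
qed

abbreviation NX :: "real fps" where "NX \<equiv> - fps_X"
abbreviation ff :: "real fps" where "ff \<equiv> fps_X * (1 + fps_X)"
definition hh :: "real fps" where "hh = - (GG oo NX)"

lemma NX0: "fps_nth NX 0 = 0" by simp

lemma NN: "NX oo NX = fps_X"
  by (simp add: fps_compose_uminus)

lemma hh0: "fps_nth hh 0 = 0" unfolding hh_def by (simp add: G0)

lemma ff_hh: "ff oo hh = fps_X"
proof -
  have "ff oo hh = hh * (1 + hh)"
    using hh0 by (simp add: fps_compose_mult_distrib fps_compose_add_distrib)
  also have "\<dots> = - ((GG - GG^2) oo NX)"
    unfolding hh_def using G0
    by (simp add: fps_compose_sub_distrib fps_compose_mult_distrib algebra_simps power2_eq_square)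
  also have "\<dots> = fps_X" using G_eq by (simp add: fps_compose_uminus)
  finally show ?thesis .
qed

lemma ff0: "fps_nth ff 0 = 0" by simp
lemma ff1: "fps_nth ff 1 \<noteq> 0" by (simp add: fps_mult_nth)

lemma inv_ff: "fps_inv ff = hh"
proof -
  have "fps_inv ff = fps_inv ff oo (ff oo hh)" using ff_hh by simp
  also have "\<dots> = (fps_inv ff oo ff) oo hh"
    using fps_compose_assoc[OF hh0 ff0] by simp
  also have "\<dots> = hh" using fps_inv[OF ff0 ff1] hh0 by simp
  finally show ?thesis .
qed

lemma GN0: "fps_nth (GG oo NX) 0 = 0" by (simp add: G0)

lemma hhN: "hh oo NX = - GG"
proof -
  have "GG oo NX oo NX = GG oo (NX oo NX)" using fps_compose_assoc[OF NX0 NX0] by simp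
  then show ?thesis unfolding hh_def by (simp add: fps_compose_uminus NN)
qed

lemma key:
  assumes g0: "fps_nth g 0 \<noteq> 0"
  shows "Dmat (riordan_inv g ff (Dmat u)) = inverse (g oo (- GG)) * (u oo GG)"
proof -
  have "Dmat (riordan_inv g ff (Dmat u)) = (inverse (g oo hh) * ((u oo NX) oo hh)) oo NX"
    unfolding Dmat_def riordan_inv_def riordan_def inv_ff by simp
  also have "\<dots> = (inverse (g oo hh) oo NX) * (((u oo NX) oo hh) oo NX)"
    by (simp add: fps_compose_mult_distrib)
  also have "inverse (g oo hh) oo NX = inverse ((g oo hh) oo NX)"
    using g0 hh0 by (intro fps_inverse_compose) auto
  also have "(g oo hh) oo NX = g oo (- GG)"
    using fps_compose_assoc[OF NX0 hh0, of g] hhN by simp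
  also have "((u oo NX) oo hh) oo NX = u oo GG"
  proof -
    have "(u oo NX) oo hh = u oo (NX oo hh)" using fps_compose_assoc[OF hh0 NX0] by simp
    also have "NX oo hh = GG oo NX"
    proof -
      have "fps_X oo hh = hh" using hh0 by simp
      then show ?thesis unfolding hh_def by (simp add: fps_compose_uminus)
    qed
    finally have "(u oo NX) oo hh = u oo (GG oo NX)" .
    then have "((u oo NX) oo hh) oo NX = u oo ((GG oo NX) oo NX)"
      using fps_compose_assoc[OF NX0 GN0] by simp
    also have "(GG oo NX) oo NX = GG" using fps_compose_assoc[OF NX0 NX0, of GG] NN by simp
    finally show ?thesis .
  qed
  finally show ?thesis .
qed

theorem theorem4p5:
  fixes v y z :: "real fps"
  assumes "y = riordan 1 (fps_X * (1 + fps_X)) v"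
      and "z = riordan (1 + 2 * fps_X) (fps_X * (1 + fps_X)) v"
  shows "(riordan (inverse (1 + 2 * fps_X * catalanC)) (fps_X * catalanC) z
           = Dmat (riordan_inv 1 (fps_X * (1 + fps_X)) (Dmat y))) \<and>
     (riordan (inverse (1 - 4 * fps_X\<^sup>2 * catalanC\<^sup>2)) (fps_X * catalanC) z
           = Dmat (riordan_inv (1 + 2 * fps_X) (fps_X * (1 + fps_X)) (Dmat y))) \<and>
     (riordan (1 + 2 * fps_X * catalanC) (fps_X * catalanC) y
           = Dmat (riordan_inv 1 (fps_X * (1 + fps_X)) (Dmat z))) \<and>
     (riordan ((1 + 2 * fps_X * catalanC) / (1 - 2 * fps_X * catalanC)) (fps_X * catalanC) y
           = Dmat (riordan_inv (1 + 2 * fps_X) (fps_X * (1 + fps_X)) (Dmat z)))"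
proof -
  have zy: "z = (1 + 2 * fps_X) * y" using assms unfolding riordan_def by simp
  have zG: "z oo GG = (1 + 2 * GG) * (y oo GG)"
    using zy G0 by (simp add: fps_compose_mult_distrib fps_compose_add_distrib)
  have e1: "2 * fps_X * catalanC = 2 * GG" unfolding GG_def by (simp add: mult.assoc)
  have e2: "4 * fps_X\<^sup>2 * catalanC\<^sup>2 = 4 * GG^2" unfolding GG_def by (simp add: power_mult_distrib mult.assoc)
  have Xc: "fps_X * catalanC = GG" unfolding GG_def ..
  have i1: "inverse (1 + 2 * GG) * (1 + 2 * GG) = 1" using G0 by (intro inverse_mult_eq_1) simp
  have i2: "inverse (1 - 2 * GG) * (1 - 2 * GG) = 1" using G0 by (intro inverse_mult_eq_1) simp
  have c1: "(1 + 2 * fps_X) oo - GG = 1 - 2 * GG" using G0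
    by (simp add: fps_compose_add_distrib fps_compose_mult_distrib)
  have k1: "\<And>u. Dmat (riordan_inv 1 ff (Dmat u)) = u oo GG"
    using key[of 1] by simp
  have k2: "\<And>u. Dmat (riordan_inv (1 + 2 * fps_X) ff (Dmat u)) = inverse (1 - 2 * GG) * (u oo GG)"
    using key[of "1 + 2 * fps_X"] c1 by simp
  have sq: "1 - 4 * GG^2 = (1 - 2 * GG) * (1 + 2 * GG)" by (simp add: algebra_simps power2_eq_square)
  have A: "riordan (inverse (1 + 2 * GG)) GG z = y oo GG"
    unfolding riordan_def zG by (simp add: mult.assoc[symmetric] i1)
  have B: "riordan (inverse (1 - 4 * GG^2)) GG z = inverse (1 - 2 * GG) * (y oo GG)"
  proof -
    have "riordan (inverse (1 - 4 * GG^2)) GG z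
        = inverse (1 - 2 * GG) * ((inverse (1 + 2 * GG) * (1 + 2 * GG)) * (y oo GG))"
      unfolding riordan_def zG sq fps_inverse_mult by (simp only: mult.assoc)
    then show ?thesis by (simp add: i1)
  qed
  have C: "riordan (1 + 2 * GG) GG y = z oo GG"
    unfolding riordan_def zG ..
  have D: "riordan ((1 + 2 * GG) / (1 - 2 * GG)) GG y = inverse (1 - 2 * GG) * (z oo GG)"
    unfolding riordan_def zG using G0 by (simp add: fps_divide_unit ac_simps)
  show ?thesis
    unfolding e1 e2 Xc k1 k2 using A B C D by simp
qed

end
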